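(* Let $F \in \mathbb{C}^{n \times n}$ be a unitary matrix with $|F_{ij}|^2 \leq \frac{c}{n}$ for all $i,j$ (for some constant $c > 0$), let $I\in\mathbb{C}^{n\times n}$ be the identity, and let $A = [F \enspace I] \in \mathbb{C}^{n \times 2n}$. Let $1\le k,t\le n$ be integers. Then $$\left(1-\sqrt{\frac{ckt}{n}}\right) \| x \|^2_2 \leq \|Ax\|^2_2 \leq \left(1+\sqrt{\frac{ckt}{n}}\right) \| x \|^2_2$$ for all $x \in M_{k,t}$.
   Context: $M_{k,t}$ is the set of $(k,t)$-sparse vectors in $\mathbb{C}^{2n}$, i.e. vectors $x = [x_1 \enspace x_2]^T$ with $x_1, x_2 \in \mathbb{C}^n$, $x_1$ having at most $k$ nonzero entries and $x_2$ having at most $t$ nonzero entries. *)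

theory Defs
  imports "HOL-Analysis.Analysis"
begin

definition conj_transpose :: "complex^'n^'m \<Rightarrow> complex^'m^'n" where
  "conj_transpose A = (\<chi> i j. cnj (A $ j $ i))"

definition unitary_mat :: "complex^'n^'n \<Rightarrow> bool" where
  "unitary_mat F \<longleftrightarrow> F ** conj_transpose F = mat 1 \<and> conj_transpose F ** F = mat 1"

text \<open>A vector of C^{2n} is represented as a pair (x1, x2) of vectors in C^n
  (the stacked vector [x1; x2]).  Its squared Euclidean norm is
  norm x1 ^ 2 + norm x2 ^ 2.\<close>
definition sq_norm2 :: "(complex^'n) \<times> (complex^'n) \<Rightarrow> real" where
  "sq_norm2 x = (norm (fst x))\<^sup>2 + (norm (snd x))\<^sup>2"

definition nnz :: "complex^'n \<Rightarrow> nat" where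
  "nnz v = card {i. v $ i \<noteq> 0}"

definition sparse_kt :: "nat \<Rightarrow> nat \<Rightarrow> ((complex^'n) \<times> (complex^'n)) set" where
  "sparse_kt k t = {x. nnz (fst x) \<le> k \<and> nnz (snd x) \<le> t}"

text \<open>Action of the n x 2n matrix A = [F I] on the stacked vector [x1; x2].\<close>
definition concat_apply :: "complex^'n^'n \<Rightarrow> complex^'n^'n \<Rightarrow> (complex^'n) \<times> (complex^'n) \<Rightarrow> complex^'n" where
  "concat_apply F G x = F *v fst x + G *v snd x"

end

theory Submission
  imports Defs
begin

lemma sqnorm_vec: "(norm (v::complex^'n))\<^sup>2 = (\<Sum>i\<in>UNIV. (cmod (v$i))\<^sup>2)"
  unfolding norm_vec_def L2_set_def by (simp add: sum_nonneg)

lemma unitary_norm: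
  fixes F :: "complex^'n^'n"
  assumes "conj_transpose F ** F = mat 1"
  shows "(norm (F *v x))\<^sup>2 = (norm x)\<^sup>2"
proof -
  define y where "y = F *v x"
  have cy: "conj_transpose F *v y = x"
    unfolding y_def by (simp add: matrix_vector_mul_assoc assms matrix_vector_mul_lid)
  have "complex_of_real ((norm y)\<^sup>2) = (\<Sum>i\<in>UNIV. y$i * cnj (y$i))"
    unfolding sqnorm_vec by (simp only: of_real_sum complex_norm_square)
  also have "\<dots> = (\<Sum>i\<in>UNIV. (\<Sum>j\<in>UNIV. F$i$j * x$j) * cnj (y$i))"
    by (simp add: y_def matrix_vector_mult_def)
  also have "\<dots> = (\<Sum>i\<in>UNIV. \<Sum>j\<in>UNIV. x$j * (F$i$j * cnj (y$i)))"
    by (simp add: sum_distrib_right sum_distrib_left mult_ac)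
  also have "\<dots> = (\<Sum>j\<in>UNIV. x$j * (\<Sum>i\<in>UNIV. F$i$j * cnj (y$i)))"
    by (subst sum.swap) (simp add: sum_distrib_left)
  also have "\<dots> = (\<Sum>j\<in>UNIV. x$j * cnj ((conj_transpose F *v y)$j))"
    by (simp add: matrix_vector_mult_def conj_transpose_def)
  also have "\<dots> = (\<Sum>j\<in>UNIV. x$j * cnj (x$j))"
    by (simp add: cy)
  also have "\<dots> = complex_of_real ((norm x)\<^sup>2)"
    unfolding sqnorm_vec by (simp only: of_real_sum complex_norm_square)
  finally show ?thesis unfolding y_def using of_real_eq_iff by blast
qed

lemma l1_bound:
  fixes v :: "complex^'n"
  shows "(\<Sum>i\<in>UNIV. cmod (v$i)) \<le> sqrt (real (nnz v)) * norm v"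
proof -
  define S where "S = {i. v$i \<noteq> 0}"
  have e1: "(\<Sum>i\<in>UNIV. cmod (v$i)) = (\<Sum>i\<in>S. cmod (v$i))"
    by (rule sum.mono_neutral_cong_right) (auto simp: S_def)
  have e2: "(\<Sum>i\<in>UNIV. (cmod (v$i))\<^sup>2) = (\<Sum>i\<in>S. (cmod (v$i))\<^sup>2)"
    by (rule sum.mono_neutral_cong_right) (auto simp: S_def)
  have "(\<Sum>i\<in>S. cmod (v$i))\<^sup>2 \<le> (\<Sum>i\<in>S. (cmod (v$i))\<^sup>2) * card S"
    by (rule sum_squared_le_sum_of_squares)
  also have "\<dots> = (sqrt (real (nnz v)) * norm v)\<^sup>2"
    by (simp add: power_mult_distrib sqnorm_vec e2 nnz_def S_def)
  finally have "(\<Sum>i\<in>S. cmod (v$i))\<^sup>2 \<le> (sqrt (real (nnz v)) * norm v)\<^sup>2" .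
  then show ?thesis unfolding e1
    by (rule power2_le_imp_le) simp_all
qed


theorem theorem5:
  fixes F :: "complex^'n^'n" and c :: real and k t :: nat
    and x :: "(complex^'n) \<times> (complex^'n)"
  assumes "unitary_mat F"
    and "c > 0"
    and "\<And>i j. (cmod (F $ i $ j))\<^sup>2 \<le> c / real CARD('n)"
    and "1 \<le> k" and "k \<le> CARD('n)" and "1 \<le> t" and "t \<le> CARD('n)"
    and "x \<in> sparse_kt k t"
  shows "(1 - sqrt (c * real k * real t / real CARD('n))) * sq_norm2 x
           \<le> (norm (concat_apply F (mat 1) x))\<^sup>2
       \<and> (norm (concat_apply F (mat 1) x))\<^sup>2
           \<le> (1 + sqrt (c * real k * real t / real CARD('n))) * sq_norm2 x"
proof -
  obtain x1 x2 where xx: "x = (x1, x2)" by (cases x)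
  define u where "u = F *v x1"
  define s where "s = sqrt (c / real CARD('n))"
  define a where "a = norm x1"
  define b where "b = norm x2"
  define r where "r = sqrt (c * real k * real t / real CARD('n))"
  have s0: "s \<ge> 0" unfolding s_def using assms(2) by simp
  have r_eq: "r = s * sqrt (real k) * sqrt (real t)"
    unfolding r_def s_def by (simp add: real_sqrt_mult[symmetric])
  have nk: "nnz x1 \<le> k" and nt: "nnz x2 \<le> t"
    using assms(8) by (auto simp: sparse_kt_def xx)
  have un: "(norm u)\<^sup>2 = a\<^sup>2"
    using assms(1) unfolding u_def a_def unitary_mat_def by (simp add: unitary_norm)
  have Fb: "cmod (F$i$j) \<le> s" for i j
    unfolding s_def using assms(3)[of i j] by (simp add: real_le_rsqrt)
  have L1a: "(\<Sum>j\<in>UNIV. cmod (x1$j)) \<le> sqrt (real k) * a"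
    using l1_bound[of x1] nk unfolding a_def
    by (meson mult_right_mono norm_ge_zero of_nat_le_iff order_trans real_sqrt_le_iff)
  have L1b: "(\<Sum>j\<in>UNIV. cmod (x2$j)) \<le> sqrt (real t) * b"
    using l1_bound[of x2] nt unfolding b_def
    by (meson mult_right_mono norm_ge_zero of_nat_le_iff order_trans real_sqrt_le_iff)
  have ub: "cmod (u$i) \<le> s * (\<Sum>j\<in>UNIV. cmod (x1$j))" for i
  proof -
    have "cmod (u$i) = cmod (\<Sum>j\<in>UNIV. F$i$j * x1$j)"
      by (simp add: u_def matrix_vector_mult_def)
    also have "\<dots> \<le> (\<Sum>j\<in>UNIV. cmod (F$i$j) * cmod (x1$j))"
      by (rule order_trans[OF norm_sum]) (simp add: norm_mult)
    also have "\<dots> \<le> (\<Sum>j\<in>UNIV. s * cmod (x1$j))"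
      by (rule sum_mono) (simp add: Fb mult_right_mono)
    finally show ?thesis by (simp add: sum_distrib_left)
  qed
  have ib: "\<bar>inner u x2\<bar> \<le> r * (a * b)"
  proof -
    have "\<bar>inner u x2\<bar> \<le> (\<Sum>i\<in>UNIV. \<bar>inner (u$i) (x2$i)\<bar>)"
      unfolding inner_vec_def by (rule sum_abs)
    also have "\<dots> \<le> (\<Sum>i\<in>UNIV. (s * (sqrt (real k) * a)) * cmod (x2$i))"
    proof (rule sum_mono)
      fix i
      have "\<bar>inner (u$i) (x2$i)\<bar> \<le> cmod (u$i) * cmod (x2$i)"
        by (rule Cauchy_Schwarz_ineq2)
      also have "\<dots> \<le> (s * (sqrt (real k) * a)) * cmod (x2$i)"
        apply (rule mult_right_mono, rule order_trans[OF ub])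
        using L1a s0 by (auto intro: mult_left_mono)
      finally show "\<bar>inner (u$i) (x2$i)\<bar> \<le> (s * (sqrt (real k) * a)) * cmod (x2$i)" .
    qed
    also have "\<dots> = (s * (sqrt (real k) * a)) * (\<Sum>i\<in>UNIV. cmod (x2$i))"
      by (simp add: sum_distrib_left)
    also have "\<dots> \<le> (s * (sqrt (real k) * a)) * (sqrt (real t) * b)"
      by (rule mult_left_mono[OF L1b]) (simp add: s0 a_def)
    finally show ?thesis by (simp add: r_eq mult_ac)
  qed
  have ab: "2 * (a * b) \<le> a\<^sup>2 + b\<^sup>2"
    using sum_squares_bound[of a b] by (simp add: mult_ac)
  have r0: "r \<ge> 0" unfolding r_def using assms(2) by simp
  have ca: "concat_apply F (mat 1) x = u + x2"
    by (simp add: concat_apply_def xx u_def matrix_vector_mul_lid)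
  have nn: "(norm (u + x2))\<^sup>2 = a\<^sup>2 + b\<^sup>2 + 2 * inner u x2"
    using dot_norm[of u x2] un unfolding b_def by simp
  have sq: "sq_norm2 x = a\<^sup>2 + b\<^sup>2" by (simp add: sq_norm2_def xx a_def b_def)
  have "2 * \<bar>inner u x2\<bar> \<le> r * (a\<^sup>2 + b\<^sup>2)"
    using ib mult_left_mono[OF ab r0] by linarith
  then show ?thesis
    unfolding ca nn sq r_def[symmetric] by (auto simp: algebra_simps abs_le_iff)
qed

end
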